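(* Let $n\ge 2$ and $N\ge 1$ be integers and let $p$ be a prime with $p\mid N$. Then \[ Z_n(N,p)=\frac{n!}{N}\sum_{\substack{1\le u_1<u_2<\dots<u_{n-1}<N\\ u_1,\;u_2-u_1,\;\dots,\;u_{n-1}-u_{n-2},\;u_{n-1}\in\mathcal P_p}}\frac{1}{u_1u_2\cdots u_{n-1}} . \] (Since $p\mid N$, the condition $u_{n-1}\in\mathcal P_p$ is equivalent to $N-u_{n-1}\in\mathcal P_p$.)
   Context: For a prime $p$, $\mathcal P_p$ denotes the set of positive integers not divisible by $p$. For integers $n,N\ge1$ with $p\mid N$, $Z_n(N,p):=\sum \frac{1}{l_1l_2\cdots l_n}$, the sum over all $(l_1,\dots,l_n)\in\mathcal P_p^n$ with $l_1+\dots+l_n=N$. *)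

theory Defs
  imports "HOL-Analysis.Analysis"
begin

definition inP :: "nat \<Rightarrow> nat \<Rightarrow> bool" where
  "inP p l \<longleftrightarrow> l \<ge> 1 \<and> \<not> p dvd l"

definition Zn :: "nat \<Rightarrow> nat \<Rightarrow> nat \<Rightarrow> real" where
  "Zn n N p = (\<Sum>l \<in> {l \<in> {..<n} \<rightarrow>\<^sub>E {1..N}. (\<forall>i<n. inP p (l i)) \<and> (\<Sum>i<n. l i) = N}.
                 1 / (\<Prod>i<n. real (l i)))"

text \<open>Index set of the right-hand sum: (u_1,...,u_{n-1}) stored as u 0,...,u (n-2),
  with 1 <= u_1 < ... < u_{n-1} < N, u_1 in P_p, u_{j+1}-u_j in P_p, u_{n-1} in P_p.\<close>
definition Uset :: "nat \<Rightarrow> nat \<Rightarrow> nat \<Rightarrow> (nat \<Rightarrow> nat) set" where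
  "Uset n N p = {u \<in> {..<n-1} \<rightarrow>\<^sub>E {1..<N}.
      (\<forall>i j. i < j \<and> j < n - 1 \<longrightarrow> u i < u j) \<and>
      inP p (u 0) \<and>
      (\<forall>i. i + 1 < n - 1 \<longrightarrow> inP p (u (i+1) - u i)) \<and>
      inP p (u (n - 2))}"

end

theory Submission
  imports Defs "HOL-Combinatorics.Permutations"
begin


lemma lemA:
  fixes x :: "nat \<Rightarrow> real"
  assumes "\<forall>j<n. x j > 0"
  shows "(\<Sum>\<sigma> | \<sigma> permutes {..<n}. 1 / (\<Prod>k<n. \<Sum>j\<le>k. x (\<sigma> j))) = 1 / (\<Prod>j<n. x j)"
  using assms
proof (induction n arbitrary: x)
  case 0
  then show ?case by simp
next
  case (Suc n)
  have ins: "{..<Suc n} = insert n {..<n}" by auto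
  define S where "S = (\<Sum>j\<le>n. x j)"
  have Spos: "S > 0" unfolding S_def using Suc.prems
    by (intro sum_pos) auto
  have Pn: "(\<Prod>j\<le>n. x j) > 0" using Suc.prems by (intro prod_pos) auto
  have inner: "(\<Sum>q | q permutes {..<n}. 1 / (\<Prod>k<Suc n. \<Sum>j\<le>k. x ((Transposition.transpose n b \<circ> q) j)))
      = x b / (S * (\<Prod>j\<le>n. x j))" if b: "b \<in> {..<Suc n}" for b
  proof -
    define y where "y = x \<circ> Transposition.transpose n b"
    have ypos: "\<forall>j<n. y j > 0" unfolding y_def using Suc.prems b
      by (auto simp: Transposition.transpose_def)
    have last: "(\<Sum>j\<le>n. x ((Transposition.transpose n b \<circ> q) j)) = S" if q: "q permutes {..<n}" for q
    proof -
      have "Transposition.transpose n b \<circ> q permutes {..n}"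
        using q b by (intro permutes_compose permutes_swap_id permutes_subset[OF q]) auto
      then show ?thesis unfolding S_def using sum.permute[of "Transposition.transpose n b \<circ> q" "{..n}" x]
        by (simp add: comp_def)
    qed
    have "(\<Sum>q | q permutes {..<n}. 1 / (\<Prod>k<Suc n. \<Sum>j\<le>k. x ((Transposition.transpose n b \<circ> q) j)))
        = (\<Sum>q | q permutes {..<n}. (1/S) * (1 / (\<Prod>k<n. \<Sum>j\<le>k. y (q j))))"
    proof (rule sum.cong[OF refl])
      fix q assume q: "q \<in> {q. q permutes {..<n}}"
      have "(\<Prod>k<Suc n. \<Sum>j\<le>k. x ((Transposition.transpose n b \<circ> q) j))
          = (\<Prod>k<n. \<Sum>j\<le>k. x ((Transposition.transpose n b \<circ> q) j)) * S"
        using last q by simp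
      also have "(\<Prod>k<n. \<Sum>j\<le>k. x ((Transposition.transpose n b \<circ> q) j)) = (\<Prod>k<n. \<Sum>j\<le>k. y (q j))"
        unfolding y_def by simp
      finally show "1 / (\<Prod>k<Suc n. \<Sum>j\<le>k. x ((Transposition.transpose n b \<circ> q) j)) = (1/S) * (1 / (\<Prod>k<n. \<Sum>j\<le>k. y (q j)))"
        by simp
    qed
    also have "\<dots> = (1/S) * (1 / (\<Prod>j<n. y j))"
      by (subst sum_distrib_left[symmetric]) (simp only: Suc.IH[OF ypos])
    also have "(\<Prod>j<n. y j) = (\<Prod>j\<le>n. x j) / x b"
    proof -
      have "(\<Prod>j\<le>n. x j) = (\<Prod>j\<le>n. y j)"
        unfolding y_def using b by (intro prod.permute permutes_swap_id) auto
      also have "\<dots> = (\<Prod>j<n. y j) * x b"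
        by (simp add: lessThan_Suc_atMost[symmetric] y_def)
      moreover have "x b > 0" using Suc.prems b by simp
      ultimately show ?thesis by (simp add: field_simps)
    qed
    finally show ?thesis using Pn Suc.prems b by (simp add: field_simps)
  qed
  have "(\<Sum>\<sigma> | \<sigma> permutes {..<Suc n}. 1 / (\<Prod>k<Suc n. \<Sum>j\<le>k. x (\<sigma> j)))
      = (\<Sum>b\<in>{..<Suc n}. x b / (S * (\<Prod>j\<le>n. x j)))"
  proof -
    have "{\<sigma>. \<sigma> permutes {..<Suc n}} = {\<sigma>. \<sigma> permutes insert n {..<n}}" by (simp add: ins)
    then show ?thesis
      apply (simp only:)
      apply (subst sum_over_permutations_insert[OF finite_lessThan, of n])
       apply simp
      apply (subst ins[symmetric])
      using inner by (intro sum.cong) auto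
  qed
  also have "\<dots> = S / (S * (\<Prod>j\<le>n. x j))"
    by (simp add: sum_divide_distrib[symmetric] S_def lessThan_Suc_atMost)
  also have "\<dots> = 1 / (\<Prod>j<Suc n. x j)" using Spos by (simp add: lessThan_Suc_atMost)
  finally show ?case .
qed


definition LL :: "nat \<Rightarrow> nat \<Rightarrow> nat \<Rightarrow> (nat \<Rightarrow> nat) set" where
  "LL n N p = {l \<in> {..<n} \<rightarrow>\<^sub>E {1..N}. (\<forall>i<n. inP p (l i)) \<and> (\<Sum>i<n. l i) = N}"

definition FF :: "nat \<Rightarrow> (nat \<Rightarrow> nat) \<Rightarrow> real" where
  "FF n m = 1 / (\<Prod>k<n-1. real (\<Sum>j\<le>k. m j))"

lemma step1:
  assumes "n \<ge> 2" "l \<in> LL n N p"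
  shows "1 / (\<Prod>i<n. real (l i)) = (1 / real N) * (\<Sum>\<sigma> | \<sigma> permutes {..<n}. FF n (l \<circ> \<sigma>))"
proof -
  have pos: "\<forall>j<n. real (l j) > 0" using assms(2) by (auto simp: LL_def inP_def)
  have sN: "(\<Sum>i<n. l i) = N" using assms(2) by (auto simp: LL_def)
  have "1 / (\<Prod>i<n. real (l i)) = (\<Sum>\<sigma> | \<sigma> permutes {..<n}. 1 / (\<Prod>k<n. \<Sum>j\<le>k. real (l (\<sigma> j))))"
    using lemA[OF pos] by simp
  also have "\<dots> = (\<Sum>\<sigma> | \<sigma> permutes {..<n}. (1 / real N) * FF n (l \<circ> \<sigma>))"
  proof (rule sum.cong[OF refl])
    fix \<sigma> assume s: "\<sigma> \<in> {\<sigma>. \<sigma> permutes {..<n}}"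
    have nn: "{..<n} = insert (n-1) {..<n-1}" using assms(1) by auto
    have "(\<Sum>j\<le>n-1. l (\<sigma> j)) = (\<Sum>j<n. l (\<sigma> j))"
      using assms(1) by (intro sum.cong) auto
    also have "\<dots> = N" using sum.permute[of \<sigma> "{..<n}" l] s sN by (simp add: comp_def)
    finally have last: "(\<Sum>j\<le>n-1. real (l (\<sigma> j))) = real N" by (metis of_nat_sum)
    have "(\<Prod>k<n. \<Sum>j\<le>k. real (l (\<sigma> j))) = real N * (\<Prod>k<n-1. \<Sum>j\<le>k. real (l (\<sigma> j)))"
      by (subst nn, subst prod.insert) (simp_all add: last[simplified])
    then show "1 / (\<Prod>k<n. \<Sum>j\<le>k. real (l (\<sigma> j))) = (1 / real N) * FF n (l \<circ> \<sigma>)"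
      by (simp add: FF_def)
  qed
  finally show ?thesis by (simp add: sum_distrib_left)
qed

lemma gen:
  assumes l: "l \<in> LL n N p" and t: "\<tau> permutes {..<n}"
  shows "l \<circ> \<tau> \<in> LL n N p"
proof -
  have "(\<Sum>i<n. l (\<tau> i)) = (\<Sum>i<n. l i)" using sum.permute[OF t, of l] by (simp add: comp_def)
  moreover have "\<tau> i < n" if "i < n" for i using permutes_in_image[OF t] that by simp
  moreover have "\<tau> i = i" if "\<not> i < n" for i using permutes_not_in[OF t] that by simp
  ultimately show ?thesis using l unfolding LL_def PiE_def Pi_def extensional_def by auto
qed

lemma step2:
  assumes s: "\<sigma> permutes {..<n}"
  shows "(\<Sum>l\<in>LL n N p. FF n (l \<circ> \<sigma>)) = (\<Sum>m\<in>LL n N p. FF n m)"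
  apply (rule sum.reindex_bij_witness[of _ "\<lambda>m. m \<circ> inv \<sigma>" "\<lambda>l. l \<circ> \<sigma>"])
  using s permutes_inv[OF s] gen
  by (auto simp: comp_assoc permutes_inv_o)



definition ps :: "nat \<Rightarrow> (nat \<Rightarrow> nat) \<Rightarrow> (nat \<Rightarrow> nat)" where
  "ps n m = (\<lambda>k. if k < n-1 then \<Sum>j\<le>k. m j else undefined)"

definition dd :: "nat \<Rightarrow> nat \<Rightarrow> (nat \<Rightarrow> nat) \<Rightarrow> (nat \<Rightarrow> nat)" where
  "dd n N u = (\<lambda>i. if i < n then (if i = 0 then u 0 else if i < n-1 then u i - u (i-1) else N - u (n-2)) else undefined)"

lemma psum_suc: "(\<Sum>j\<le>Suc k. m j) = (\<Sum>j\<le>k. m j) + m (Suc k)"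
  by simp

lemma LL_mono:
  assumes "m \<in> LL n N p" "i < j" "j < n"
  shows "(\<Sum>t\<le>i. m t) < (\<Sum>t\<le>j. m t)"
proof -
  have pos: "\<forall>t<n. m t \<ge> 1" using assms(1) by (auto simp: LL_def inP_def)
  have "\<forall>k. i + Suc k < n \<longrightarrow> (\<Sum>t\<le>i. m t) < (\<Sum>t\<le>i + Suc k. m t)"
  proof
    fix k show "i + Suc k < n \<longrightarrow> (\<Sum>t\<le>i. m t) < (\<Sum>t\<le>i + Suc k. m t)"
    proof (induction k)
      case 0 then show ?case using pos by auto
    next
      case (Suc k)
      have "(\<Sum>t\<le>i + Suc (Suc k). m t) = (\<Sum>t\<le>i + Suc k. m t) + m (i + Suc (Suc k))"
        by (simp only: add_Suc_right sum.atMost_Suc)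
      show ?case
      proof
        assume a: "i + Suc (Suc k) < n"
        then have "m (i + Suc (Suc k)) \<ge> 1" using pos by blast
        moreover have "(\<Sum>t\<le>i. m t) < (\<Sum>t\<le>i + Suc k. m t)" using Suc.IH a by simp
        ultimately show "(\<Sum>t\<le>i. m t) < (\<Sum>t\<le>i + Suc (Suc k). m t)"
          using \<open>(\<Sum>t\<le>i + Suc (Suc k). m t) = _\<close> by linarith
      qed
    qed
  qed
  note all = this
  obtain k where k: "j = Suc (i + k)" using less_imp_Suc_add[OF assms(2)] by blast
  have "i + Suc k < n \<longrightarrow> (\<Sum>t\<le>i. m t) < (\<Sum>t\<le>i + Suc k. m t)" using all by (rule spec)
  moreover have "i + Suc k = j" using k by simp
  ultimately show ?thesis using assms(3) by (simp del: sum.atMost_Suc)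
qed

lemma LL_total:
  assumes "m \<in> LL n N p" "n \<ge> 2"
  shows "(\<Sum>t\<le>n-2. m t) + m (n-1) = N"
proof -
  have "(\<Sum>t<n. m t) = N" using assms(1) by (simp add: LL_def)
  moreover have "{..<n} = insert (n-1) {..n-2}" using assms(2) by auto
  moreover have "n-1 \<notin> {..n-2}" using assms(2) by auto
  ultimately show ?thesis by (simp add: add.commute)
qed

lemma ps_in:
  assumes "m \<in> LL n N p" "n \<ge> 2" "prime p" "p dvd N"
  shows "ps n m \<in> Uset n N p"
proof -
  have pos: "\<forall>t<n. inP p (m t)" using assms(1) by (auto simp: LL_def)
  have tot: "(\<Sum>t\<le>n-2. m t) + m (n-1) = N" by (rule LL_total[OF assms(1,2)])
  have ge1: "(\<Sum>t\<le>k. m t) \<ge> 1" for k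
  proof -
    have "m 0 \<le> (\<Sum>t\<le>k. m t)" by (rule member_le_sum) auto
    moreover have "m 0 \<ge> 1" using pos assms(2) by (auto simp: inP_def)
    ultimately show ?thesis by linarith
  qed
  have ltN: "(\<Sum>t\<le>k. m t) < N" if "k < n-1" for k
  proof -
    have "(\<Sum>t\<le>k. m t) \<le> (\<Sum>t\<le>n-2. m t)"
      using that by (intro sum_mono2) auto
    moreover have "m (n-1) \<ge> 1" using pos assms(2) by (auto simp: inP_def)
    ultimately show ?thesis using tot by linarith
  qed
  have diff: "(\<Sum>t\<le>Suc i. m t) - (\<Sum>t\<le>i. m t) = m (Suc i)" for i by simp
  have last: "inP p (\<Sum>t\<le>n-2. m t)"
  proof -
    have m1: "inP p (m (n-1))" using pos assms(2) by simp
    have "\<not> p dvd (\<Sum>t\<le>n-2. m t)"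
    proof
      assume "p dvd (\<Sum>t\<le>n-2. m t)"
      then have "p dvd (\<Sum>t\<le>n-2. m t) + m (n-1)" using tot assms(4) by simp
      then have "p dvd m (n-1)" using \<open>p dvd (\<Sum>t\<le>n-2. m t)\<close> by (simp add: dvd_add_right_iff)
      then show False using m1 by (simp add: inP_def)
    qed
    then show ?thesis using ge1 by (simp add: inP_def)
  qed
  have A: "ps n m \<in> {..<n-1} \<rightarrow>\<^sub>E {1..<N}"
    unfolding PiE_iff ps_def extensional_def using ge1 ltN by auto
  have B: "\<forall>i j. i < j \<and> j < n - 1 \<longrightarrow> ps n m i < ps n m j"
    unfolding ps_def using LL_mono[OF assms(1)] by auto
  have C: "inP p (ps n m 0)" unfolding ps_def using pos assms(2) by simp
  have D: "\<forall>i. i + 1 < n - 1 \<longrightarrow> inP p (ps n m (i+1) - ps n m i)"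
  proof (intro allI impI)
    fix i assume "i + 1 < n - 1"
    then have "ps n m (i+1) - ps n m i = m (Suc i)" unfolding ps_def using diff[of i] by simp
    then show "inP p (ps n m (i+1) - ps n m i)" using pos \<open>i + 1 < n - 1\<close> by simp
  qed
  have "n - 2 < n - 1" using assms(2) by arith
  then have E: "inP p (ps n m (n-2))" unfolding ps_def using last by simp
  show ?thesis unfolding Uset_def using A B C D E by blast
qed

lemma Uset_facts:
  assumes "u \<in> Uset n N p"
  shows "u \<in> {..<n-1} \<rightarrow>\<^sub>E {1..<N}" "\<And>i j. i < j \<Longrightarrow> j < n - 1 \<Longrightarrow> u i < u j"
    "inP p (u 0)" "\<And>i. i + 1 < n - 1 \<Longrightarrow> inP p (u (i+1) - u i)" "inP p (u (n - 2))"
  using assms unfolding Uset_def by auto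

lemma dd_psum:
  assumes "u \<in> Uset n N p" "n \<ge> 2"
  shows "k < n - 1 \<Longrightarrow> (\<Sum>j\<le>k. dd n N u j) = u k"
proof (induction k)
  case 0 then show ?case using assms(2) by (simp add: dd_def)
next
  case (Suc k)
  have "u k < u (Suc k)" using Uset_facts(2)[OF assms(1), of k "Suc k"] Suc.prems by simp
  moreover have "dd n N u (Suc k) = u (Suc k) - u k" using Suc.prems by (simp add: dd_def)
  ultimately show ?case using Suc by simp
qed

lemma dd_in:
  assumes "u \<in> Uset n N p" "n \<ge> 2" "prime p" "p dvd N"
  shows "dd n N u \<in> LL n N p"
proof -
  note F = Uset_facts[OF assms(1)]
  have lt: "u i < N" if "i < n - 1" for i using F(1) that by (auto simp: PiE_iff)
  have vals: "inP p (dd n N u i) \<and> dd n N u i \<le> N" if i: "i < n" for i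
  proof (cases "i = 0")
    case True then show ?thesis using F(3) lt[of 0] assms(2) i by (simp add: dd_def)
  next
    case False
    show ?thesis
    proof (cases "i < n - 1")
      case True
      have "inP p (u (i - 1 + 1) - u (i - 1))" using F(4)[of "i-1"] True False by simp
      then show ?thesis using True False i lt[of i] by (simp add: dd_def)
    next
      case c: False
      have e: "dd n N u i = N - u (n-2)" using i c False by (simp add: dd_def)
      have "n - 2 < n - 1" using assms(2) by arith
      then have l: "u (n-2) < N" by (rule lt)
      have "\<not> p dvd (N - u (n-2))"
      proof
        assume "p dvd N - u (n-2)"
        then have "p dvd N - (N - u (n-2))" using assms(4) by (simp add: dvd_diff_nat)
        then have "p dvd u (n-2)" using l by simp
        then show False using F(5) by (simp add: inP_def)
      qed
      then show ?thesis using e l by (simp add: inP_def)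
    qed
  qed
  have sum: "(\<Sum>i<n. dd n N u i) = N"
  proof -
    have "{..<n} = insert (n-1) {..n-2}" using assms(2) by auto
    moreover have "n-1 \<notin> {..n-2}" using assms(2) by auto
    moreover have "n - 2 < n - 1" using assms(2) by arith
    moreover have "dd n N u (n-1) = N - u (n-2)" using assms(2) by (simp add: dd_def)
    ultimately have "(\<Sum>i<n. dd n N u i) = (N - u (n-2)) + u (n-2)"
      using dd_psum[OF assms(1,2)] by simp
    also have "\<dots> = N" using lt[OF \<open>n - 2 < n - 1\<close>] by simp
    finally show ?thesis .
  qed
  show ?thesis unfolding LL_def using vals sum
    by (auto simp: PiE_iff extensional_def inP_def dd_def)
qed

lemma ps_dd:
  assumes "u \<in> Uset n N p" "n \<ge> 2"
  shows "ps n (dd n N u) = u"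
proof
  fix k show "ps n (dd n N u) k = u k"
    using dd_psum[OF assms, of k] Uset_facts(1)[OF assms(1)]
    by (auto simp: ps_def PiE_iff extensional_def)
qed

lemma dd_ps:
  assumes "m \<in> LL n N p" "n \<ge> 2"
  shows "dd n N (ps n m) = m"
proof
  fix i
  have ext: "m \<in> extensional {..<n}" using assms(1) by (auto simp: LL_def PiE_iff)
  show "dd n N (ps n m) i = m i"
  proof (cases "i < n")
    case False then show ?thesis using ext by (simp add: dd_def extensional_def)
  next
    case i: True
    show ?thesis
    proof (cases "i = 0")
      case True then show ?thesis using assms(2) by (simp add: dd_def ps_def)
    next
      case z: False
      show ?thesis
      proof (cases "i < n - 1")
        case True
        then obtain j where j: "i = Suc j" using z not0_implies_Suc by blast
        then show ?thesis using True z i by (simp add: dd_def ps_def)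
      next
        case False
        have "n - 2 < n - 1" using assms(2) by arith
        moreover have "i = n - 1" using False i by arith
        ultimately show ?thesis using LL_total[OF assms] z i assms(2)
          by (simp add: dd_def ps_def)
      qed
    qed
  qed
qed

lemma step3:
  assumes "n \<ge> 2" "prime p" "p dvd N"
  shows "(\<Sum>m\<in>LL n N p. FF n m) = (\<Sum>u\<in>Uset n N p. 1 / (\<Prod>i<n-1. real (u i)))"
  apply (rule sum.reindex_bij_witness[of _ "dd n N" "ps n"])
  using dd_ps ps_dd ps_in dd_in assms apply blast+
  apply (simp add: FF_def ps_def)
  done



theorem lemma2p1:
  fixes n N p :: nat
  assumes "n \<ge> 2" and "N \<ge> 1" and "prime p" and "p dvd N"
  shows "Zn n N p = fact n / real N * (\<Sum>u \<in> Uset n N p. 1 / (\<Prod>i<n-1. real (u i)))"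
proof -
  have "Zn n N p = (\<Sum>l\<in>LL n N p. 1 / (\<Prod>i<n. real (l i)))"
    by (simp add: Zn_def LL_def)
  also have "\<dots> = (\<Sum>l\<in>LL n N p. (1 / real N) * (\<Sum>\<sigma> | \<sigma> permutes {..<n}. FF n (l \<circ> \<sigma>)))"
    using step1[OF assms(1)] by (intro sum.cong) auto
  also have "\<dots> = (1 / real N) * (\<Sum>\<sigma> | \<sigma> permutes {..<n}. \<Sum>l\<in>LL n N p. FF n (l \<circ> \<sigma>))"
    by (simp add: sum_distrib_left[symmetric] sum.swap[of _ "LL n N p"] sum_divide_distrib)
  also have "\<dots> = (1 / real N) * (\<Sum>\<sigma> | \<sigma> permutes {..<n}. \<Sum>m\<in>LL n N p. FF n m)"
    by (rule arg_cong[where f="\<lambda>x. _ * x"], rule sum.cong[OF refl], rule step2) simp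
  also have "\<dots> = (1 / real N) * (fact n * (\<Sum>m\<in>LL n N p. FF n m))"
    using card_permutations[of "{..<n}" n] by simp
  also have "\<dots> = fact n / real N * (\<Sum>u \<in> Uset n N p. 1 / (\<Prod>i<n-1. real (u i)))"
    using step3[OF assms(1,3,4)] by simp
  finally show ?thesis .
qed

end
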